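(* Let $\mathcal S_2=\{\rho_\theta:\theta\in\Theta_2\}$, $\Theta_2\subset\mathbb{R}^{d_2}$, be a quantum statistical model and $\mathcal S_1=\{\rho_{(\theta_1,\dots,\theta_{d_1},0,\dots,0)}\}$ the submodel with $d_1\le d_2$ free parameters. Fix $\theta=(\theta_1,\dots,\theta_{d_1},0,\dots,0)\in\Theta_2$ and assume $\mathcal S_2$ is D-invariant at $\theta$. Let $\vec X=(X^1,\dots,X^{d_1})$ be Hermitian matrices lying in the real span of the SLDs $L_{\theta;1},\dots,L_{\theta;d_2}$ of $\mathcal S_2$ and satisfying $\mathrm{Tr}\,(\partial_k\rho_\theta)X^j=\delta^j_k$ for $j,k=1,\dots,d_1$. Define the $d_1\times d_2$ real matrix $P_{\vec X}$ by $(P_{\vec X})^k_l=\mathrm{Tr}\,(\partial_l\rho_\theta)X^k$ ($k\le d_1$, $l\le d_2$). Then for every real symmetric positive definite $d_1\times d_1$ matrix $G$, $$C_\theta(G,\vec X)=C^R_{\theta,2}\big(P_{\vec X}^TGP_{\vec X}\big),$$ where $C^R_{\theta,2}$ denotes the RLD bound of the model $\mathcal S_2$ at $\theta$ (evaluated at the positive semidefinite $d_2\times d_2$ weight $P_{\vec X}^TGP_{\vec X}$).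
   Context: A quantum statistical model is a family of strictly positive density matrices on a finite-dimensional Hilbert space depending smoothly on a parameter in an open subset of $\mathbb{R}^d$; $\partial_k=\partial/\partial\theta^k$. Notation: $X\circ Y=(XY+YX)/2$; $\langle X,Y\rangle_\theta=\mathrm{Tr}\,\rho_\theta(X^*\circ Y)$. SLDs $L_{\theta;j}$: Hermitian with $\partial_j\rho_\theta=\rho_\theta\circ L_{\theta;j}$. RLDs $\tilde L_{\theta;j}$: $\partial_j\rho_\theta=\rho_\theta\tilde L_{\theta;j}$; RLD Fisher matrix $\tilde J_{\theta;j,k}=\mathrm{Tr}\,\rho_\theta\tilde L_{\theta;k}\tilde L_{\theta;j}^*$. The D-operator $\mathcal D_\theta$ is defined on Hermitian matrices by $\rho_\theta\circ\mathcal D_\theta(X)=i[X,\rho_\theta]$; the model is D-invariant at $\theta$ if the real span of its SLDs at $\theta$ is mapped into itself by $\mathcal D_\theta$. For a complex matrix $W$: $\mathrm{Re}\,W=(W+\bar W)/2$, $\mathrm{Im}\,W=(W-\bar W)/(2i)$, $|A|=(A^*A)^{1/2}$. RLD bound with weight $H$ (real symmetric positive semidefinite): $C^R_\theta(H)=\mathrm{tr}\sqrt H\,\mathrm{Re}(\tilde J_\theta^{-1})\sqrt H+\mathrm{tr}|\sqrt H\,\mathrm{Im}(\tilde J_\theta^{-1})\sqrt H|$. For a tuple $\vec X$ of Hermitian matrices, $Z_\theta^{k,j}(\vec X)=\mathrm{Tr}\,\rho_\theta X^kX^j$ and $C_\theta(G,\vec X)=\mathrm{tr}\sqrt G\,\mathrm{Re}\,Z_\theta(\vec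 X)\sqrt G+\mathrm{tr}|\sqrt G\,\mathrm{Im}\,Z_\theta(\vec X)\sqrt G|$. *)

theory Defs
  imports "HOL-Analysis.Analysis"
begin

definition adj :: "complex^'n^'m \<Rightarrow> complex^'m^'n" where
  "adj A = (\<chi> i j. cnj (A $ j $ i))"

definition hermitian :: "complex^'n^'n \<Rightarrow> bool" where
  "hermitian A \<longleftrightarrow> adj A = A"

definition cscale :: "complex \<Rightarrow> complex^'n^'m \<Rightarrow> complex^'n^'m" where
  "cscale c A = (\<chi> i j. c * A $ i $ j)"

definition jprod :: "complex^'n^'n \<Rightarrow> complex^'n^'n \<Rightarrow> complex^'n^'n" where
  "jprod X Y = (1/2::real) *\<^sub>R (X ** Y + Y ** X)"

definition cinner :: "complex^'n \<Rightarrow> complex^'n \<Rightarrow> complex" where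
  "cinner x y = (\<Sum>i\<in>UNIV. cnj (x $ i) * y $ i)"

definition strictly_pos_density :: "complex^'n^'n \<Rightarrow> bool" where
  "strictly_pos_density A \<longleftrightarrow> hermitian A \<and> trace A = 1 \<and>
     (\<forall>x. x \<noteq> 0 \<longrightarrow> 0 < Re (cinner x (A *v x)))"

definition dir_deriv :: "'a::real_normed_vector \<Rightarrow> ('a \<Rightarrow> 'b::real_normed_vector) \<Rightarrow> 'a \<Rightarrow> 'b" where
  "dir_deriv v f = (\<lambda>x. frechet_derivative f (at x) v)"

text \<open>C-infinity on an open set: all iterated directional derivatives exist and are differentiable\<close>
definition smooth_on :: "'a::real_normed_vector set \<Rightarrow> ('a \<Rightarrow> 'b::real_normed_vector) \<Rightarrow> bool" where
  "smooth_on S f \<longleftrightarrow> (\<forall>vs. (foldr dir_deriv vs f) differentiable_on S)"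

definition qmodel :: "(real^'d) set \<Rightarrow> (real^'d \<Rightarrow> complex^'n^'n) \<Rightarrow> bool" where
  "qmodel \<Theta> \<rho> \<longleftrightarrow> open \<Theta> \<and> (\<forall>\<theta>\<in>\<Theta>. strictly_pos_density (\<rho> \<theta>)) \<and> smooth_on \<Theta> \<rho>"

definition partial_rho :: "(real^'d \<Rightarrow> complex^'n^'n) \<Rightarrow> real^'d \<Rightarrow> 'd \<Rightarrow> complex^'n^'n" where
  "partial_rho \<rho> \<theta> k = frechet_derivative \<rho> (at \<theta>) (axis k 1)"

definition SLD :: "(real^'d \<Rightarrow> complex^'n^'n) \<Rightarrow> real^'d \<Rightarrow> 'd \<Rightarrow> complex^'n^'n" where
  "SLD \<rho> \<theta> j = (THE L. hermitian L \<and> partial_rho \<rho> \<theta> j = jprod (\<rho> \<theta>) L)"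

definition RLD :: "(real^'d \<Rightarrow> complex^'n^'n) \<Rightarrow> real^'d \<Rightarrow> 'd \<Rightarrow> complex^'n^'n" where
  "RLD \<rho> \<theta> j = (THE L. partial_rho \<rho> \<theta> j = \<rho> \<theta> ** L)"

definition RLD_Fisher :: "(real^'d \<Rightarrow> complex^'n^'n) \<Rightarrow> real^'d \<Rightarrow> complex^'d^'d" where
  "RLD_Fisher \<rho> \<theta> = (\<chi> j k. trace (\<rho> \<theta> ** RLD \<rho> \<theta> k ** adj (RLD \<rho> \<theta> j)))"

definition D_op :: "(real^'d \<Rightarrow> complex^'n^'n) \<Rightarrow> real^'d \<Rightarrow> complex^'n^'n \<Rightarrow> complex^'n^'n" where
  "D_op \<rho> \<theta> X = (THE Y. hermitian Y \<and>
      jprod (\<rho> \<theta>) Y = cscale \<i> (X ** \<rho> \<theta> - \<rho> \<theta> ** X))"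

text \<open>span is the real span (complex matrices as a real vector space)\<close>
definition D_invariant :: "(real^'d \<Rightarrow> complex^'n^'n) \<Rightarrow> real^'d \<Rightarrow> bool" where
  "D_invariant \<rho> \<theta> \<longleftrightarrow>
     (\<forall>X \<in> span (range (SLD \<rho> \<theta>)). D_op \<rho> \<theta> X \<in> span (range (SLD \<rho> \<theta>)))"

definition psd :: "real^'m^'m \<Rightarrow> bool" where
  "psd A \<longleftrightarrow> transpose A = A \<and> (\<forall>x. 0 \<le> x \<bullet> (A *v x))"

definition posdef :: "real^'m^'m \<Rightarrow> bool" where
  "posdef A \<longleftrightarrow> transpose A = A \<and> (\<forall>x. x \<noteq> 0 \<longrightarrow> 0 < x \<bullet> (A *v x))"

definition msqrt :: "real^'m^'m \<Rightarrow> real^'m^'m" where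
  "msqrt A = (THE B. psd B \<and> B ** B = A)"

definition mabs :: "real^'m^'m \<Rightarrow> real^'m^'m" where
  "mabs A = msqrt (transpose A ** A)"

definition mRe :: "complex^'n^'m \<Rightarrow> real^'n^'m" where
  "mRe W = (\<chi> i j. Re (W $ i $ j))"

definition mIm :: "complex^'n^'m \<Rightarrow> real^'n^'m" where
  "mIm W = (\<chi> i j. Im (W $ i $ j))"

definition RLD_bound :: "(real^'d \<Rightarrow> complex^'n^'n) \<Rightarrow> real^'d \<Rightarrow> real^'d^'d \<Rightarrow> real" where
  "RLD_bound \<rho> \<theta> H =
     (let Jinv = matrix_inv (RLD_Fisher \<rho> \<theta>) in
      trace (msqrt H ** mRe Jinv ** msqrt H) + trace (mabs (msqrt H ** mIm Jinv ** msqrt H)))"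

definition Zmat :: "(real^'d \<Rightarrow> complex^'n^'n) \<Rightarrow> real^'d \<Rightarrow> ('k \<Rightarrow> complex^'n^'n) \<Rightarrow> complex^'k^'k" where
  "Zmat \<rho> \<theta> X = (\<chi> k j. trace (\<rho> \<theta> ** X k ** X j))"

definition C_bound :: "(real^'d \<Rightarrow> complex^'n^'n) \<Rightarrow> real^'d \<Rightarrow> real^'k^'k \<Rightarrow> ('k \<Rightarrow> complex^'n^'n) \<Rightarrow> real" where
  "C_bound \<rho> \<theta> G X =
     trace (msqrt G ** mRe (Zmat \<rho> \<theta> X) ** msqrt G) + trace (mabs (msqrt G ** mIm (Zmat \<rho> \<theta> X) ** msqrt G))"

text \<open>(P_X)^k_l = Tr (d_l rho) X^k (real for Hermitian arguments)\<close>
definition Pmat :: "(real^'d \<Rightarrow> complex^'n^'n) \<Rightarrow> real^'d \<Rightarrow> ('k \<Rightarrow> complex^'n^'n) \<Rightarrow> real^'d^'k" where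
  "Pmat \<rho> \<theta> X = (\<chi> k l. Re (trace (partial_rho \<rho> \<theta> l ** X k)))"

end

theory Submission
  imports Defs
begin

lemma sym_dot:
  fixes A :: "real^'n^'n"
  assumes "transpose A = A"
  shows "x \<bullet> (A *v y) = (A *v x) \<bullet> y"
proof -
  have "x \<bullet> (A *v y) = (x v* A) \<bullet> y" by (simp add: dot_lmul_matrix)
  also have "x v* A = transpose A *v x" by simp
  finally show ?thesis using assms by simp
qed

lemma eigvec_of_max:
  fixes A :: "real^'n^'n" and S :: "(real^'n) set"
  assumes symA: "transpose A = A" and subS: "subspace S" and v: "v \<in> S" "norm v = 1"
    and mx: "\<And>u. u \<in> S \<Longrightarrow> norm u = 1 \<Longrightarrow> u \<bullet> (A *v u) \<le> v \<bullet> (A *v v)"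
    and w: "w \<in> S" "w \<bullet> v = 0"
  shows "w \<bullet> (A *v v) = 0"
proof -
  define l where "l = v \<bullet> (A *v v)"
  define c where "c = w \<bullet> (A *v v)"
  define d where "d = l * (w \<bullet> w) - w \<bullet> (A *v w)"
  have vv: "v \<bullet> v = 1" using v(2) by (simp add: dot_square_norm)
  have key: "2 * t * c \<le> t^2 * d" for t :: real
  proof -
    define u where "u = v + t *\<^sub>R w"
    have uS: "u \<in> S" unfolding u_def using subS v w by (simp add: subspace_add subspace_mul)
    have uu: "u \<bullet> u = 1 + t^2 * (w \<bullet> w)"
      unfolding u_def using vv w(2) by (simp add: inner_add_left inner_add_right inner_commute power2_eq_square algebra_simps)
    have un: "u \<noteq> 0" using uu by (metis inner_zero_left le_add_same_cancel1 not_one_le_zero zero_le_mult_iff zero_le_power2 inner_ge_zero)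
    have "(u /\<^sub>R norm u) \<bullet> (A *v (u /\<^sub>R norm u)) \<le> l"
      unfolding l_def by (rule mx) (use uS subS un in \<open>auto simp: subspace_mul\<close>)
    hence "(u \<bullet> (A *v u)) / (norm u)^2 \<le> l"
      by (simp add: matrix_vector_mult_scaleR power2_eq_square divide_simps)
    hence "u \<bullet> (A *v u) \<le> l * (u \<bullet> u)" using un
      by (simp add: dot_square_norm divide_le_eq)
    moreover have "u \<bullet> (A *v u) = l + 2 * t * c + t^2 * (w \<bullet> (A *v w))"
    proof -
      have "v \<bullet> (A *v w) = c" unfolding c_def using sym_dot[OF symA, of v w] by (simp add: inner_commute)
      thus ?thesis unfolding u_def l_def c_def
        by (simp add: matrix_vector_right_distrib matrix_vector_mult_scaleR inner_add_left inner_add_right power2_eq_square algebra_simps)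
    qed
    ultimately show ?thesis unfolding d_def uu by (simp add: algebra_simps power2_eq_square)
  qed
  have "c = 0"
  proof (rule ccontr)
    assume c0: "c \<noteq> 0"
    define t where "t = c / (\<bar>d\<bar> + 1)"
    have pos: "\<bar>d\<bar> + 1 > 0" by simp
    have et: "(\<bar>d\<bar> + 1) * t = c" unfolding t_def using pos by simp
    have "(\<bar>d\<bar> + 1)^2 * (2 * t * c) \<le> (\<bar>d\<bar> + 1)^2 * (t^2 * d)" by (rule mult_left_mono[OF key]) simp
    hence "2 * c * c * (\<bar>d\<bar> + 1) \<le> c * c * d"
      by (metis et power2_eq_square mult.assoc mult.commute mult.left_commute)
    moreover have "c * c * d \<le> c * c * \<bar>d\<bar>" by (simp add: mult_left_mono)
    moreover have "c * c > 0" using c0 by (cases "c > 0") (auto intro: mult_pos_pos mult_neg_neg)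
    moreover have "c * c * \<bar>d\<bar> \<ge> 0" by simp
    moreover have "2 * c * c * (\<bar>d\<bar> + 1) = 2 * (c * c * \<bar>d\<bar>) + 2 * (c * c)" by (simp add: algebra_simps)
    ultimately show False by linarith
  qed
  thus ?thesis by (simp add: c_def)
qed

lemma eig_of_max:
  fixes A :: "real^'n^'n" and S :: "(real^'n) set"
  assumes symA: "transpose A = A" and subS: "subspace S" and inv: "\<forall>x\<in>S. A *v x \<in> S"
    and v: "v \<in> S" "norm v = 1"
    and mx: "\<And>u. u \<in> S \<Longrightarrow> norm u = 1 \<Longrightarrow> u \<bullet> (A *v u) \<le> v \<bullet> (A *v v)"
  shows "A *v v = (v \<bullet> (A *v v)) *\<^sub>R v"
proof -
  define l where "l = v \<bullet> (A *v v)"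
  define w where "w = A *v v - l *\<^sub>R v"
  have vv: "v \<bullet> v = 1" using v(2) by (simp add: dot_square_norm)
  have wS: "w \<in> S" unfolding w_def using inv v subS by (simp add: subspace_diff subspace_mul)
  have "v \<bullet> w = 0" unfolding w_def l_def using vv by (simp add: inner_diff_right)
  hence wv: "w \<bullet> v = 0" by (simp add: inner_commute)
  have "w \<bullet> (A *v v) = 0" by (rule eigvec_of_max[OF symA subS v mx wS wv])
  hence "w \<bullet> w = 0" using wv unfolding w_def by (simp add: inner_diff_right)
  thus ?thesis unfolding w_def l_def by simp
qed

lemma spectral_subspace:
  fixes A :: "real^'n^'n"
  assumes symA: "transpose A = A"
  shows "subspace S \<Longrightarrow> (\<forall>x\<in>S. A *v x \<in> S) \<Longrightarrow> \<exists>B. B \<subseteq> S \<and> pairwise orthogonal B \<and> (\<forall>b\<in>B. norm b = 1)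
     \<and> (\<forall>b\<in>B. A *v b = (b \<bullet> (A *v b)) *\<^sub>R b) \<and> span B = S"
proof (induction "dim S" arbitrary: S rule: less_induct)
  case less
  show ?case
  proof (cases "S = {0}")
    case True
    thus ?thesis by (intro exI[of _ "{}"]) auto
  next
    case False
    then obtain x where x: "x \<in> S" "x \<noteq> 0" using less.prems(1) subspace_0 by blast
    define K where "K = S \<inter> sphere 0 1"
    have Kc: "compact K" unfolding K_def using closed_subspace[OF less.prems(1)]
      by (simp add: compact_Int_closed closed_Int_compact)
    have "x /\<^sub>R norm x \<in> K" unfolding K_def using x less.prems(1) by (simp add: subspace_mul)
    hence Kne: "K \<noteq> {}" by blast
    have cont: "continuous_on K (\<lambda>u. u \<bullet> (A *v u))"
    proof -
      have "bounded_linear ((*v) A)" by (simp add: linear_conv_bounded_linear[symmetric])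
      hence "continuous_on K ((*v) A)" by (simp add: linear_continuous_on)
      thus ?thesis by (intro continuous_intros)
    qed
    obtain v where vK: "v \<in> K" and vmax: "\<forall>u\<in>K. u \<bullet> (A *v u) \<le> v \<bullet> (A *v v)"
      using continuous_attains_sup[OF Kc Kne cont] by blast
    have v: "v \<in> S" "norm v = 1" using vK unfolding K_def by auto
    have mx: "u \<bullet> (A *v u) \<le> v \<bullet> (A *v v)" if "u \<in> S" "norm u = 1" for u
      using vmax that unfolding K_def by auto
    have ev: "A *v v = (v \<bullet> (A *v v)) *\<^sub>R v" by (rule eig_of_max[OF symA less.prems v mx])
    define S' where "S' = {y \<in> S. y \<bullet> v = 0}"
    have subS': "subspace S'" using less.prems(1) unfolding S'_def subspace_def
      by (auto simp: inner_add_left)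
    have invS': "\<forall>y\<in>S'. A *v y \<in> S'"
    proof
      fix y assume y: "y \<in> S'"
      have "(A *v y) \<bullet> v = y \<bullet> (A *v v)" using sym_dot[OF symA, of y v] by simp
      also have "\<dots> = 0" using y unfolding S'_def by (subst ev) (simp add: inner_commute)
      finally show "A *v y \<in> S'" using y less.prems(2) unfolding S'_def by auto
    qed
    have vv: "v \<bullet> v = 1" using v(2) by (simp add: dot_square_norm)
    have "v \<notin> S'" using vv unfolding S'_def by auto
    hence "S' \<subset> S" using v unfolding S'_def by blast
    hence "dim S' < dim S"
      using dim_psubset[of S' S] span_eq_iff[of S'] span_eq_iff[of S] subS' less.prems(1) by metis
    from less.hyps[OF this subS' invS'] obtain B' where
      B': "B' \<subseteq> S'" "pairwise orthogonal B'" "\<forall>b\<in>B'. norm b = 1"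
          "\<forall>b\<in>B'. A *v b = (b \<bullet> (A *v b)) *\<^sub>R b" "span B' = S'" by blast
    show ?thesis
    proof (intro exI[of _ "insert v B'"] conjI)
      show "insert v B' \<subseteq> S" using B'(1) v unfolding S'_def by auto
      show "pairwise orthogonal (insert v B')"
        using B'(1,2) by (intro pairwise_orthogonal_insert) (auto simp: S'_def orthogonal_def inner_commute)
      show "\<forall>b\<in>insert v B'. norm b = 1" using B'(3) v by auto
      show "\<forall>b\<in>insert v B'. A *v b = (b \<bullet> (A *v b)) *\<^sub>R b" using B'(4) ev by auto
      show "span (insert v B') = S"
      proof
        show "span (insert v B') \<subseteq> S"
          using B'(1) v less.prems(1) unfolding S'_def by (intro span_minimal) auto
        show "S \<subseteq> span (insert v B')"
        proof
          fix y assume y: "y \<in> S"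
          have "y - (y \<bullet> v) *\<^sub>R v \<in> S'" unfolding S'_def using y v vv less.prems(1)
            by (simp add: subspace_diff subspace_mul inner_diff_left)
          thus "y \<in> span (insert v B')" unfolding span_insert B'(5) by blast
        qed
      qed
    qed
  qed
qed

definition onb :: "(real^'n) set \<Rightarrow> bool" where
  "onb B \<longleftrightarrow> finite B \<and> (\<forall>b\<in>B. \<forall>c\<in>B. b \<bullet> c = (if b = c then 1 else 0)) \<and> (\<forall>x. x = (\<Sum>b\<in>B. (b \<bullet> x) *\<^sub>R b))"

lemma spectral:
  fixes A :: "real^'n^'n"
  assumes symA: "transpose A = A"
  shows "\<exists>B. onb B \<and> (\<forall>b\<in>B. A *v b = (b \<bullet> (A *v b)) *\<^sub>R b)"
proof -
  obtain B where B: "pairwise orthogonal B" "\<forall>b\<in>B. norm b = 1"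
          "\<forall>b\<in>B. A *v b = (b \<bullet> (A *v b)) *\<^sub>R b" "span B = UNIV"
    using spectral_subspace[OF symA, of UNIV] by auto
  have "0 \<notin> B" using B(2) by auto
  hence fin: "finite B" using pairwise_orthogonal_independent[OF B(1)] independent_imp_finite by blast
  have ortho: "\<forall>b\<in>B. \<forall>c\<in>B. b \<bullet> c = (if b = c then 1 else 0)"
    using B(1,2) by (auto simp: pairwise_def orthogonal_def dot_square_norm)
  have exp: "x = (\<Sum>b\<in>B. (b \<bullet> x) *\<^sub>R b)" for x
  proof -
    define y where "y = x - (\<Sum>b\<in>B. (b \<bullet> x) *\<^sub>R b)"
    have "orthogonal y c" if c: "c \<in> B" for c
    proof -
      have "c \<bullet> (\<Sum>b\<in>B. (b \<bullet> x) *\<^sub>R b) = (\<Sum>b\<in>B. (b \<bullet> x) * (c \<bullet> b))"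
        by (simp add: inner_sum_right)
      also have "\<dots> = (\<Sum>b\<in>B. if b = c then c \<bullet> x else 0)"
        using ortho c by (intro sum.cong) (auto simp: inner_commute)
      also have "\<dots> = c \<bullet> x" using c fin by simp
      finally have "c \<bullet> (\<Sum>b\<in>B. (b \<bullet> x) *\<^sub>R b) = c \<bullet> x" .
      hence "c \<bullet> y = 0" unfolding y_def by (simp add: inner_diff_right)
      thus ?thesis by (simp add: orthogonal_def inner_commute)
    qed
    hence "orthogonal y y" using B(4) orthogonal_to_span[of y B y] by auto
    thus ?thesis unfolding y_def orthogonal_def by simp
  qed
  show ?thesis using fin ortho exp B(3) unfolding onb_def by blast
qed

definition oprod :: "real^'n \<Rightarrow> real^'m \<Rightarrow> real^'m^'n" where
  "oprod u v = (\<chi> i j. u$i * v$j)"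

lemma oprod_mv: "oprod u v *v x = (v \<bullet> x) *\<^sub>R u"
  by (simp add: oprod_def matrix_vector_mult_def vec_eq_iff inner_vec_def sum_distrib_left mult_ac)

lemma scaleR_mv: "((c::real) *\<^sub>R (M::real^'n^'m)) *v x = c *\<^sub>R (M *v x)"
  by (simp add: matrix_vector_mult_def vec_eq_iff sum_distrib_left mult_ac)

lemma sum_mv: "(\<Sum>i\<in>I. M i) *v (x::real^'n) = (\<Sum>i\<in>I. M i *v x)"
  by (induction I rule: infinite_finite_induct) (auto simp: matrix_vector_mult_add_rdistrib)

definition smat :: "(real^'n) set \<Rightarrow> (real^'n \<Rightarrow> real) \<Rightarrow> real^'n^'n" where
  "smat B f = (\<Sum>b\<in>B. f b *\<^sub>R oprod b b)"

lemma smat_mv: "smat B f *v x = (\<Sum>b\<in>B. (f b * (b \<bullet> x)) *\<^sub>R b)"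
  by (simp add: smat_def sum_mv scaleR_mv oprod_mv)

lemma onb_dot_sum:
  assumes "onb B" "c \<in> B"
  shows "c \<bullet> (\<Sum>b\<in>B. g b *\<^sub>R b) = g c"
proof -
  have "c \<bullet> (\<Sum>b\<in>B. g b *\<^sub>R b) = (\<Sum>b\<in>B. g b * (c \<bullet> b))" by (simp add: inner_sum_right)
  also have "\<dots> = (\<Sum>b\<in>B. if b = c then g c else 0)"
    using assms unfolding onb_def by (intro sum.cong) auto
  also have "\<dots> = g c" using assms unfolding onb_def by simp
  finally show ?thesis .
qed

lemma onb_sum_eq:
  assumes "onb B" "(\<Sum>b\<in>B. g b *\<^sub>R b) = (\<Sum>b\<in>B. h b *\<^sub>R b)" "c \<in> B"
  shows "g c = h c"
  using onb_dot_sum[OF assms(1,3), of g] onb_dot_sum[OF assms(1,3), of h] assms(2) by simp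

lemma smat_dot: "onb B \<Longrightarrow> c \<in> B \<Longrightarrow> c \<bullet> (smat B f *v x) = f c * (c \<bullet> x)"
  by (simp add: smat_mv onb_dot_sum)

lemma smat_mult: assumes "onb B" shows "smat B f ** smat B g = smat B (\<lambda>b. f b * g b)"
proof -
  have "smat B f *v (smat B g *v x) = smat B (\<lambda>b. f b * g b) *v x" for x
    unfolding smat_mv[of B f] smat_mv[of B "\<lambda>b. f b * g b"] using assms
    by (intro sum.cong refl) (simp add: smat_dot)
  thus ?thesis by (simp add: matrix_eq matrix_vector_mul_assoc)
qed

lemma transpose_oprod: "transpose (oprod u v) = oprod v u"
  by (simp add: oprod_def transpose_def vec_eq_iff mult.commute)

lemma transpose_sum: "transpose (\<Sum>i\<in>I. M i) = (\<Sum>i\<in>I. transpose (M i))"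
  by (induction I rule: infinite_finite_induct) (auto simp: transpose_def vec_eq_iff)

lemma transpose_scaleR: "transpose ((c::real) *\<^sub>R M) = c *\<^sub>R transpose M"
  by (simp add: transpose_def vec_eq_iff)

lemma smat_sym: "transpose (smat B f) = smat B f"
  by (simp add: smat_def transpose_sum transpose_scaleR transpose_oprod)

lemma trace_sum: "trace (\<Sum>i\<in>I. M i) = (\<Sum>i\<in>I. trace (M i :: 'a::comm_semiring_1^'n^'n))"
  by (induction I rule: infinite_finite_induct) (auto simp: trace_add trace_0[simplified])

lemma trace_scaleR: "trace ((c::real) *\<^sub>R M) = c * trace M"
  by (simp add: trace_def sum_distrib_left)

lemma trace_oprod: "trace (oprod u v) = u \<bullet> v"
  by (simp add: trace_def oprod_def inner_vec_def)

lemma smat_trace: "onb B \<Longrightarrow> trace (smat B f) = (\<Sum>b\<in>B. f b)"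
  unfolding smat_def trace_sum trace_scaleR trace_oprod onb_def by simp

lemma smat_quad: "x \<bullet> (smat B f *v x) = (\<Sum>b\<in>B. f b * (b \<bullet> x)^2)"
  by (simp add: smat_mv inner_sum_right power2_eq_square inner_commute mult_ac)

lemma smat_psd: "(\<forall>b\<in>B. f b \<ge> 0) \<Longrightarrow> psd (smat B f)"
  unfolding psd_def smat_quad using smat_sym by (auto intro!: sum_nonneg)

lemma smat_eq_eig:
  assumes "onb B" "\<forall>b\<in>B. A *v b = f b *\<^sub>R b"
  shows "A = smat B f"
proof -
  have "A *v x = smat B f *v x" for x
  proof -
    have "A *v x = A *v (\<Sum>b\<in>B. (b \<bullet> x) *\<^sub>R b)" using assms(1) unfolding onb_def by metis
    also have "\<dots> = (\<Sum>b\<in>B. (b \<bullet> x) *\<^sub>R (A *v b))"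
      by (simp add: linear_sum[OF matrix_vector_mul_linear] matrix_vector_mult_scaleR)
    also have "\<dots> = smat B f *v x" unfolding smat_mv using assms(2)
      by (intro sum.cong) (auto simp: mult.commute)
    finally show ?thesis .
  qed
  thus ?thesis by (simp add: matrix_eq)
qed

lemma quad_zero:
  fixes c d :: real
  assumes key: "\<And>t. 2 * t * c \<le> t^2 * d"
  shows "c = 0"
proof (rule ccontr)
  assume c0: "c \<noteq> 0"
  define t where "t = c / (\<bar>d\<bar> + 1)"
  have pos: "\<bar>d\<bar> + 1 > 0" by simp
  have et: "(\<bar>d\<bar> + 1) * t = c" unfolding t_def using pos by simp
  have "(\<bar>d\<bar> + 1)^2 * (2 * t * c) \<le> (\<bar>d\<bar> + 1)^2 * (t^2 * d)" by (rule mult_left_mono[OF key]) simp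
  hence "2 * c * c * (\<bar>d\<bar> + 1) \<le> c * c * d"
    by (metis et power2_eq_square mult.assoc mult.commute mult.left_commute)
  moreover have "c * c * d \<le> c * c * \<bar>d\<bar>" by (simp add: mult_left_mono)
  moreover have "c * c > 0" using c0 by (cases "c > 0") (auto intro: mult_pos_pos mult_neg_neg)
  moreover have "c * c * \<bar>d\<bar> \<ge> 0" by simp
  moreover have "2 * c * c * (\<bar>d\<bar> + 1) = 2 * (c * c * \<bar>d\<bar>) + 2 * (c * c)" by (simp add: algebra_simps)
  ultimately show False by linarith
qed

lemma psd_sym: "psd A \<Longrightarrow> transpose A = A" by (simp add: psd_def)

lemma psd_zero:
  fixes B :: "real^'n^'n"
  assumes "psd B" "x \<bullet> (B *v x) = 0"
  shows "B *v x = 0"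
proof -
  have sym: "transpose B = B" using assms(1) by (simp add: psd_def)
  have yz: "y \<bullet> (B *v x) = 0" for y
  proof -
    have "2 * t * (- (y \<bullet> (B *v x))) \<le> t^2 * (y \<bullet> (B *v y))" for t
    proof -
      have "0 \<le> (x + t *\<^sub>R y) \<bullet> (B *v (x + t *\<^sub>R y))" using assms(1) by (simp add: psd_def)
      also have "\<dots> = x \<bullet> (B *v x) + 2 * t * (y \<bullet> (B *v x)) + t^2 * (y \<bullet> (B *v y))"
        using sym_dot[OF sym, of x y]
        by (simp add: matrix_vector_right_distrib matrix_vector_mult_scaleR inner_add_left inner_add_right power2_eq_square algebra_simps inner_commute)
      finally show ?thesis using assms(2) by simp
    qed
    from quad_zero[OF this] show ?thesis by simp
  qed
  from yz[of "B *v x"] show ?thesis by simp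
qed

lemma smat_zero: "smat B (\<lambda>_. 0) = 0" by (simp add: smat_def)

lemma psd_sqrt_unique:
  fixes B C :: "real^'n^'n"
  assumes B: "psd B" and C: "psd C" and eq: "B ** B = C ** C"
  shows "B = C"
proof -
  define D where "D = B - C"
  have symD: "transpose D = D" using B C unfolding D_def psd_def by (simp add: transpose_def vec_eq_iff)
  obtain E where E: "onb E" "\<forall>e\<in>E. D *v e = (e \<bullet> (D *v e)) *\<^sub>R e" using spectral[OF symD] by blast
  have BC: "B *v (B *v z) = C *v (C *v z)" for z using eq by (simp add: matrix_vector_mul_assoc)
  have mu0: "e \<bullet> (D *v e) = 0" if e: "e \<in> E" for e
  proof (rule ccontr)
    define \<mu> where "\<mu> = e \<bullet> (D *v e)"
    assume "e \<bullet> (D *v e) \<noteq> 0"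
    hence mu: "\<mu> \<noteq> 0" unfolding \<mu>_def .
    have De: "D *v e = \<mu> *\<^sub>R e" using E(2) e unfolding \<mu>_def by blast
    have ee: "e \<bullet> e = 1" using E(1) e unfolding onb_def by auto
    have "B *v (D *v e) + D *v (C *v e) = 0"
      unfolding D_def using BC[of e] by (simp add: matrix_vector_mult_diff_rdistrib matrix_vector_mult_diff_distrib)
    hence "e \<bullet> (B *v (D *v e)) + e \<bullet> (D *v (C *v e)) = 0" by (metis inner_add_right inner_zero_right)
    moreover have "e \<bullet> (D *v (C *v e)) = \<mu> * (e \<bullet> (C *v e))"
      using sym_dot[OF symD, of e "C *v e"] De by simp
    ultimately have "\<mu> * (e \<bullet> (B *v e) + e \<bullet> (C *v e)) = 0"
      using De by (simp add: matrix_vector_mult_scaleR algebra_simps)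
    hence s0: "e \<bullet> (B *v e) + e \<bullet> (C *v e) = 0" using mu by simp
    have "e \<bullet> (B *v e) \<ge> 0" "e \<bullet> (C *v e) \<ge> 0" using B C by (auto simp: psd_def)
    hence "e \<bullet> (B *v e) = 0" "e \<bullet> (C *v e) = 0" using s0 by linarith+
    hence "B *v e = 0" "C *v e = 0" using psd_zero B C by blast+
    hence "D *v e = 0" unfolding D_def by (simp add: matrix_vector_mult_diff_rdistrib)
    hence "\<mu> = 0" unfolding \<mu>_def by simp
    with mu show False ..
  qed
  have "D = smat E (\<lambda>_. 0)" using smat_eq_eig[OF E(1)] E(2) mu0 by simp
  thus ?thesis unfolding D_def smat_zero by simp
qed

lemma psd_sqrt_exists:
  fixes A :: "real^'n^'n"
  assumes A: "psd A"
  shows "\<exists>B E. onb E \<and> A = smat E (\<lambda>b. b \<bullet> (A *v b)) \<and> B = smat E (\<lambda>b. sqrt (b \<bullet> (A *v b))) \<and> psd B \<and> B ** B = A"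
proof -
  obtain E where E: "onb E" "\<forall>e\<in>E. A *v e = (e \<bullet> (A *v e)) *\<^sub>R e" using spectral[OF psd_sym[OF A]] by blast
  have AE: "A = smat E (\<lambda>b. b \<bullet> (A *v b))" using smat_eq_eig[OF E(1)] E(2) by simp
  have nn: "\<forall>b\<in>E. b \<bullet> (A *v b) \<ge> 0" using A by (simp add: psd_def)
  have "smat E (\<lambda>b. sqrt (b \<bullet> (A *v b))) ** smat E (\<lambda>b. sqrt (b \<bullet> (A *v b))) = smat E (\<lambda>b. b \<bullet> (A *v b))"
    unfolding smat_mult[OF E(1)] unfolding smat_def using nn by (intro sum.cong refl) (simp add: real_sqrt_mult_self)
  thus ?thesis using E(1) AE smat_psd[of E] nn by (intro exI[of _ "smat E (\<lambda>b. sqrt (b \<bullet> (A *v b)))"] exI[of _ E]) auto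
qed

lemma msqrt_unique: "psd S \<Longrightarrow> S ** S = A \<Longrightarrow> msqrt A = S"
  unfolding msqrt_def by (rule the_equality) (auto intro: psd_sqrt_unique)

lemma msqrt: assumes "psd A" shows "psd (msqrt A)" "msqrt A ** msqrt A = A"
proof -
  obtain B where "psd B" "B ** B = A" using psd_sqrt_exists[OF assms] by blast
  with msqrt_unique[OF this] show "psd (msqrt A)" "msqrt A ** msqrt A = A" by auto
qed

lemma dot_transpose_mv: "x \<bullet> (transpose Y *v z) = (Y *v x) \<bullet> (z::real^'b)"
proof -
  have "x \<bullet> (transpose Y *v z) = (transpose Y *v z) \<bullet> x" by (simp add: inner_commute)
  also have "\<dots> = z \<bullet> (Y *v x)" by (simp add: dot_lmul_matrix)
  finally show ?thesis by (simp add: inner_commute)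
qed

lemma psd_gram: "psd (transpose Y ** (Y::real^'a^'b))"
proof -
  have "x \<bullet> ((transpose Y ** Y) *v x) \<ge> 0" for x
    using dot_transpose_mv[of x Y "Y *v x"] by (simp add: matrix_vector_mul_assoc[symmetric] del: transpose_matrix_vector)
  thus ?thesis unfolding psd_def by (simp add: matrix_transpose_mul)
qed

lemma trace_msqrt_swap:
  fixes Y :: "real^'a^'b"
  shows "trace (msqrt (transpose Y ** Y)) = trace (msqrt (Y ** transpose Y))"
proof -
  define Q where "Q = transpose Y ** Y"
  define lam where "lam b = b \<bullet> (Q *v b)" for b
  obtain B E where E: "onb E" "Q = smat E lam" "B = smat E (\<lambda>b. sqrt (lam b))" "psd B" "B ** B = Q"
    using psd_sqrt_exists[OF psd_gram[of Y]] unfolding Q_def[symmetric] lam_def by blast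
  have msQ: "msqrt Q = B" using msqrt_unique E by blast
  have Yb: "(Y *v b) \<bullet> (Y *v b) = lam b" for b
    unfolding lam_def Q_def using dot_transpose_mv[of b Y "Y *v b"] by (simp add: matrix_vector_mul_assoc)
  have lam_nn: "lam b \<ge> 0" for b using Yb[of b] by (metis inner_ge_zero)
  define g where "g b = (if lam b > 0 then 1 / sqrt (lam b) else 0)" for b
  define T where "T = smat E g"
  define S2 where "S2 = Y ** T ** transpose Y"
  have symT: "transpose T = T" unfolding T_def by (rule smat_sym)
  have psdS2: "psd S2" unfolding psd_def
  proof
    show "transpose S2 = S2" unfolding S2_def by (simp add: matrix_transpose_mul symT matrix_mul_assoc)
    show "\<forall>x. 0 \<le> x \<bullet> (S2 *v x)"
    proof
      fix x
      have "x \<bullet> (S2 *v x) = (transpose Y *v x) \<bullet> (T *v (transpose Y *v x))"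
        unfolding S2_def using dot_transpose_mv[of x "transpose Y"]
        by (simp add: matrix_vector_mul_assoc[symmetric])
      also have "\<dots> \<ge> 0" unfolding T_def smat_quad using lam_nn
        by (intro sum_nonneg) (auto simp: g_def)
      finally show "0 \<le> x \<bullet> (S2 *v x)" .
    qed
  qed
  have YP: "Y ** smat E (\<lambda>b. g b * (lam b * g b)) = Y"
  proof -
    have "Y *v (smat E (\<lambda>b. g b * (lam b * g b)) *v x) = Y *v x" for x
    proof -
      have "Y *v x = Y *v (\<Sum>b\<in>E. (b \<bullet> x) *\<^sub>R b)" using E(1) unfolding onb_def by metis
      also have "\<dots> = (\<Sum>b\<in>E. (b \<bullet> x) *\<^sub>R (Y *v b))"
        by (simp add: linear_sum[OF matrix_vector_mul_linear] matrix_vector_mult_scaleR)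
      also have "\<dots> = (\<Sum>b\<in>E. (g b * (lam b * g b) * (b \<bullet> x)) *\<^sub>R (Y *v b))"
      proof (intro sum.cong refl)
        fix b
        show "(b \<bullet> x) *\<^sub>R (Y *v b) = (g b * (lam b * g b) * (b \<bullet> x)) *\<^sub>R (Y *v b)"
        proof (cases "lam b > 0")
          case True
          hence "g b * (lam b * g b) = 1" unfolding g_def
            by (simp add: field_simps)
          thus ?thesis by simp
        next
          case False
          hence "lam b = 0" using lam_nn[of b] by simp
          hence "Y *v b = 0" using Yb[of b] by simp
          thus ?thesis by simp
        qed
      qed
      also have "\<dots> = Y *v (smat E (\<lambda>b. g b * (lam b * g b)) *v x)"
        unfolding smat_mv by (simp add: linear_sum[OF matrix_vector_mul_linear] matrix_vector_mult_scaleR)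
      finally show ?thesis ..
    qed
    thus ?thesis by (simp add: matrix_eq matrix_vector_mul_assoc)
  qed
  have "S2 ** S2 = Y ** (T ** Q ** T) ** transpose Y"
    unfolding S2_def Q_def by (simp add: matrix_mul_assoc)
  also have "T ** Q ** T = smat E (\<lambda>b. g b * (lam b * g b))"
    unfolding T_def E(2) smat_mult[OF E(1)] by (simp add: mult_ac)
  also have "Y ** smat E (\<lambda>b. g b * (lam b * g b)) ** transpose Y = Y ** transpose Y"
    using YP by simp
  finally have ms2: "msqrt (Y ** transpose Y) = S2" using msqrt_unique[OF psdS2] by blast
  have "trace S2 = trace (T ** Q)" unfolding S2_def Q_def
    by (metis matrix_mul_assoc trace_mul_sym)
  also have "\<dots> = (\<Sum>b\<in>E. g b * lam b)" unfolding T_def E(2) smat_mult[OF E(1)] smat_trace[OF E(1)] ..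
  also have "\<dots> = (\<Sum>b\<in>E. sqrt (lam b))"
  proof (intro sum.cong refl)
    fix b show "g b * lam b = sqrt (lam b)"
      unfolding g_def using lam_nn[of b] by (auto simp: field_simps)
  qed
  also have "\<dots> = trace B" unfolding E(3) smat_trace[OF E(1)] ..
  finally show ?thesis using ms2 msQ Q_def by simp
qed

lemma trace_cyc3: "trace ((A::real^'a^'b) ** (B::real^'c^'a) ** (C::real^'b^'c)) = trace (B ** C ** A)"
  by (metis matrix_mul_assoc trace_mul_sym)

lemma re_part_transfer:
  fixes G :: "real^'k^'k" and P :: "real^'d^'k" and R :: "real^'d^'d"
  assumes G: "psd G"
  defines "H \<equiv> transpose P ** G ** P"
  shows "trace (msqrt G ** (P ** R ** transpose P) ** msqrt G) = trace (msqrt H ** R ** msqrt H)"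
proof -
  have H: "psd H" unfolding H_def psd_def
  proof
    show "transpose (transpose P ** G ** P) = transpose P ** G ** P"
      using psd_sym[OF G] by (simp add: matrix_transpose_mul matrix_mul_assoc)
    show "\<forall>x. 0 \<le> x \<bullet> ((transpose P ** G ** P) *v x)"
    proof
      fix x
      have "x \<bullet> ((transpose P ** G ** P) *v x) = (P *v x) \<bullet> (G *v (P *v x))"
        using dot_transpose_mv[of x P "G *v (P *v x)"] by (simp add: matrix_vector_mul_assoc[symmetric] del: transpose_matrix_vector)
      thus "0 \<le> x \<bullet> ((transpose P ** G ** P) *v x)" using G by (simp add: psd_def)
    qed
  qed
  have "trace (msqrt G ** (P ** R ** transpose P) ** msqrt G) = trace ((P ** R ** transpose P) ** (msqrt G ** msqrt G))"
    by (metis trace_cyc3 matrix_mul_assoc)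
  also have "\<dots> = trace (P ** (R ** (transpose P ** G)))" using msqrt(2)[OF G] by (simp add: matrix_mul_assoc)
  also have "\<dots> = trace (R ** H)" unfolding H_def by (metis trace_mul_sym matrix_mul_assoc)
  also have "\<dots> = trace (msqrt H ** R ** msqrt H)"
    using msqrt(2)[OF H] by (metis trace_mul_sym matrix_mul_assoc)
  finally show ?thesis .
qed

lemma psd_congr: "psd G \<Longrightarrow> psd (transpose P ** G ** P)"
proof -
  assume G: "psd G"
  show ?thesis unfolding psd_def
  proof
    show "transpose (transpose P ** G ** P) = transpose P ** G ** P"
      using psd_sym[OF G] by (simp add: matrix_transpose_mul matrix_mul_assoc)
    show "\<forall>x. 0 \<le> x \<bullet> ((transpose P ** G ** P) *v x)"
    proof
      fix x
      have "x \<bullet> ((transpose P ** G ** P) *v x) = (P *v x) \<bullet> (G *v (P *v x))"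
        using dot_transpose_mv[of x P "G *v (P *v x)"] by (simp add: matrix_vector_mul_assoc[symmetric] del: transpose_matrix_vector)
      thus "0 \<le> x \<bullet> ((transpose P ** G ** P) *v x)" using G by (simp add: psd_def)
    qed
  qed
qed

lemma mabs_neg: "mabs (- A) = mabs (A::real^'n^'n)"
proof -
  have "transpose (- A) ** (- A) = transpose A ** A"
    by (simp add: matrix_matrix_mult_def transpose_def vec_eq_iff)
  thus ?thesis unfolding mabs_def by simp
qed

lemma im_part_transfer:
  fixes G :: "real^'k^'k" and P :: "real^'d^'k" and K :: "real^'d^'d"
  assumes G: "psd G"
  defines "H \<equiv> transpose P ** G ** P"
  shows "trace (mabs (msqrt G ** (P ** K ** transpose P) ** msqrt G)) = trace (mabs (msqrt H ** K ** msqrt H))"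
proof -
  have H: "psd H" unfolding H_def by (rule psd_congr[OF G])
  define g where "g = msqrt G"
  define s where "s = msqrt H"
  have gT: "transpose g = g" and gg: "g ** g = G" unfolding g_def using msqrt[OF G] psd_sym by auto
  have sT: "transpose s = s" and ss: "s ** s = H" unfolding s_def using msqrt[OF H] psd_sym by auto
  define M where "M = g ** P"
  have HM: "H = transpose M ** M" unfolding H_def M_def
    by (simp add: matrix_transpose_mul gT matrix_mul_assoc gg[symmetric])
  have ss': "s ** (s ** Z) = H ** Z" for Z :: "real^'z^'d" using ss by (simp add: matrix_mul_assoc)
  have MM': "transpose M ** (M ** Z) = H ** Z" for Z :: "real^'z^'d" using HM by (simp add: matrix_mul_assoc)
  define Bm where "Bm = M ** K ** transpose M"
  define Am where "Am = s ** K ** s"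
  define Y where "Y = s ** K ** transpose M"
  have Bm_eq: "msqrt G ** (P ** K ** transpose P) ** msqrt G = Bm"
    unfolding Bm_def M_def g_def[symmetric] by (simp add: matrix_transpose_mul gT matrix_mul_assoc)
  have 1: "transpose Bm ** Bm = transpose Y ** Y"
    unfolding Bm_def Y_def by (simp add: matrix_transpose_mul sT matrix_mul_assoc[symmetric] ss' MM')
  have 2: "Y ** transpose Y = Am ** transpose Am"
    unfolding Am_def Y_def by (simp add: matrix_transpose_mul sT matrix_mul_assoc[symmetric] ss' MM')
  have "trace (mabs Bm) = trace (msqrt (Y ** transpose Y))" unfolding mabs_def 1 by (rule trace_msqrt_swap)
  also have "\<dots> = trace (msqrt (transpose (transpose Am) ** transpose Am))" unfolding 2 by simp
  also have "\<dots> = trace (mabs Am)" unfolding mabs_def using trace_msqrt_swap[of "transpose Am"] by simp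
  finally show ?thesis unfolding Bm_eq Am_def s_def .
qed

lemma cx_scaleR: "r *\<^sub>R (z::complex) = of_real r * z" by (rule scaleR_conv_of_real)
lemma madd_rdistrib: "(A + B) ** C = A ** C + B ** (C::'a::semiring_1^'k^'n)"
  by (vector matrix_matrix_mult_def sum.distrib[symmetric] field_simps)
lemma mdiff_rdistrib: "(A - B) ** C = A ** C - B ** (C::'a::ring_1^'k^'n)"
  by (vector matrix_matrix_mult_def sum_subtractf[symmetric] field_simps)
lemma mdiff_ldistrib: "C ** (A - B) = C ** A - C ** (B::'a::ring_1^'k^'n)"
  by (vector matrix_matrix_mult_def sum_subtractf[symmetric] field_simps)
lemma adj_adj[simp]: "adj (adj A) = A" by (simp add: adj_def vec_eq_iff)
lemma adj_mult: "adj (A ** B) = adj B ** adj (A::complex^'n^'m)"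
  by (simp add: adj_def matrix_matrix_mult_def vec_eq_iff mult.commute)
lemma adj_add: "adj (A + B) = adj A + adj B" by (simp add: adj_def vec_eq_iff)
lemma adj_diff: "adj (A - B) = adj A - adj B" by (simp add: adj_def vec_eq_iff)
lemma adj_scaleR: "adj (r *\<^sub>R A) = r *\<^sub>R adj A" by (simp add: adj_def vec_eq_iff cx_scaleR)
lemma adj_cscale: "adj (cscale c A) = cscale (cnj c) (adj A)" by (simp add: adj_def cscale_def vec_eq_iff)
lemma trace_adj: "trace (adj A) = cnj (trace A)" by (simp add: adj_def trace_def)
lemma cscale_mult_left: "cscale c A ** B = cscale c (A ** B)"
  by (simp add: cscale_def matrix_matrix_mult_def vec_eq_iff sum_distrib_left mult.assoc)
lemma cscale_mult_right: "A ** cscale c B = cscale c (A ** (B::complex^'k^'n))"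
  by (simp add: cscale_def matrix_matrix_mult_def vec_eq_iff sum_distrib_left mult_ac)
lemma trace_cscale: "trace (cscale c A) = c * trace A" by (simp add: cscale_def trace_def sum_distrib_left)
lemma scaleR_cscale: "r *\<^sub>R A = cscale (of_real r) A" by (simp add: cscale_def vec_eq_iff cx_scaleR)
lemma cscale_add: "cscale c (A + B) = cscale c A + cscale c B" by (simp add: cscale_def vec_eq_iff algebra_simps)
lemma cscale_add2: "cscale (c + d) A = cscale c A + cscale d A" by (simp add: cscale_def vec_eq_iff algebra_simps)
lemma cscale_cscale: "cscale c (cscale d A) = cscale (c * d) A" by (simp add: cscale_def vec_eq_iff)
lemma cscale_sum: "cscale c (\<Sum>i\<in>I. f i) = (\<Sum>i\<in>I. cscale c (f i))"
  by (induction I rule: infinite_finite_induct) (auto simp: cscale_add cscale_def vec_eq_iff distrib_left)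
lemma mult_sum_right: "A ** (\<Sum>i\<in>I. f i) = (\<Sum>i\<in>I. A ** f i :: 'a::comm_semiring_1^'k^'n)"
  by (induction I rule: infinite_finite_induct) (auto simp: matrix_add_ldistrib)
lemma mult_sum_left: "(\<Sum>i\<in>I. f i) ** A = (\<Sum>i\<in>I. f i ** A :: 'a::comm_semiring_1^'k^'n)"
  by (induction I rule: infinite_finite_induct) (auto simp: madd_rdistrib)
lemma adj_sum: "adj (\<Sum>i\<in>I. f i) = (\<Sum>i\<in>I. adj (f i))"
  by (induction I rule: infinite_finite_induct) (auto simp: adj_add adj_def vec_eq_iff)

lemma linear_adj: "linear (adj :: complex^'n^'m \<Rightarrow> complex^'m^'n)"
  by (rule linearI) (simp_all add: adj_add adj_scaleR)

lemma bounded_linear_adj: "bounded_linear (adj :: complex^'n^'m \<Rightarrow> complex^'m^'n)"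
  using linear_adj by (simp add: linear_conv_bounded_linear)

lemma deriv_hermitian:
  fixes \<rho> :: "real^'d \<Rightarrow> complex^'n^'n"
  assumes d: "(\<rho> has_derivative \<rho>') (at \<theta>)" and o: "open S" "\<theta> \<in> S"
    and h: "\<And>t. t \<in> S \<Longrightarrow> hermitian (\<rho> t)"
  shows "hermitian (\<rho>' v)"
proof -
  have "((\<lambda>t. adj (\<rho> t)) has_derivative (\<lambda>v. adj (\<rho>' v))) (at \<theta>)"
    by (rule bounded_linear.has_derivative[OF bounded_linear_adj d])
  hence "(\<rho> has_derivative (\<lambda>v. adj (\<rho>' v))) (at \<theta>)"
    by (rule has_derivative_transform_within_open[OF _ o]) (use h in \<open>simp add: hermitian_def\<close>)
  from has_derivative_unique[OF d this] have "\<rho>' = (\<lambda>v. adj (\<rho>' v))" .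
  thus ?thesis unfolding hermitian_def by metis
qed

lemma model_facts:
  assumes "qmodel \<Theta> \<rho>" "\<theta> \<in> \<Theta>"
  shows "(\<rho> has_derivative frechet_derivative \<rho> (at \<theta>)) (at \<theta>)"
    "\<And>l. hermitian (partial_rho \<rho> \<theta> l)" "strictly_pos_density (\<rho> \<theta>)"
proof -
  have o: "open \<Theta>" and sm: "smooth_on \<Theta> \<rho>" and pd: "\<forall>t\<in>\<Theta>. strictly_pos_density (\<rho> t)"
    using assms(1) unfolding qmodel_def by auto
  have "foldr dir_deriv [] \<rho> differentiable_on \<Theta>" using sm unfolding smooth_on_def by blast
  hence "\<rho> differentiable at \<theta>" using o assms(2) by (simp add: differentiable_on_eq_differentiable_at)
  thus d: "(\<rho> has_derivative frechet_derivative \<rho> (at \<theta>)) (at \<theta>)" by (simp add: frechet_derivative_works)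
  show "\<And>l. hermitian (partial_rho \<rho> \<theta> l)" unfolding partial_rho_def
    by (rule deriv_hermitian[OF d o assms(2)]) (use pd in \<open>auto simp: strictly_pos_density_def\<close>)
  show "strictly_pos_density (\<rho> \<theta>)" using pd assms(2) by blast
qed

lemma tr_quad: "trace (adj Y ** R ** Y) = (\<Sum>j\<in>UNIV. cinner (column j Y) (R *v column j (Y::complex^'k^'n)))"
  unfolding trace_def matrix_matrix_mult_def adj_def cinner_def column_def matrix_vector_mult_def
  by (simp add: sum_distrib_left sum_distrib_right mult_ac) (rule sum.cong[OF refl], rule sum.swap)

lemma spd_nonneg: "strictly_pos_density R \<Longrightarrow> Re (cinner x (R *v x)) \<ge> 0"
  unfolding strictly_pos_density_def by (cases "x = 0") (auto simp: cinner_def intro: less_imp_le)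

lemma spd_zero: "strictly_pos_density R \<Longrightarrow> Re (cinner x (R *v x)) = 0 \<Longrightarrow> x = 0"
  unfolding strictly_pos_density_def by (metis less_irrefl)

lemma trq_nonneg: "strictly_pos_density R \<Longrightarrow> Re (trace (adj Y ** R ** Y)) \<ge> 0"
  unfolding tr_quad Re_sum by (intro sum_nonneg spd_nonneg)

lemma trq_zero:
  assumes R: "strictly_pos_density R" and z: "Re (trace (adj Y ** R ** Y)) = 0"
  shows "Y = (0::complex^'k^'n)"
proof -
  have "\<forall>j\<in>UNIV. Re (cinner (column j Y) (R *v column j Y)) = 0"
    using z unfolding tr_quad Re_sum by (subst (asm) sum_nonneg_eq_0_iff) (auto intro: spd_nonneg[OF R])
  hence "column j Y = 0" for j using spd_zero[OF R] by blast
  thus ?thesis by (simp add: vec_eq_iff column_def)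
qed

lemma jprod_adj: "hermitian R \<Longrightarrow> adj (jprod R Y) = jprod R (adj Y)"
  unfolding jprod_def hermitian_def by (simp add: adj_scaleR adj_add adj_mult add.commute)

lemma jprod_inj:
  assumes R: "strictly_pos_density R" and z: "jprod R Y = 0"
  shows "Y = 0"
proof -
  have hR: "hermitian R" using R by (simp add: strictly_pos_density_def)
  have s: "R ** Y + Y ** R = 0" using z unfolding jprod_def by simp
  have "trace (adj Y ** (R ** Y + Y ** R)) = 0" unfolding s by (simp add: trace_def)
  hence "trace (adj Y ** R ** Y) + trace (adj Y ** Y ** R) = 0"
    by (simp add: matrix_add_ldistrib trace_add matrix_mul_assoc)
  moreover have "trace (adj Y ** Y ** R) = trace (adj (adj Y) ** R ** adj Y)"
    by (metis adj_adj matrix_mul_assoc trace_mul_sym)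
  ultimately have "Re (trace (adj Y ** R ** Y)) + Re (trace (adj (adj Y) ** R ** adj Y)) = 0"
    by (metis plus_complex.sel(1) zero_complex.sel(1))
  moreover have "Re (trace (adj Y ** R ** Y)) \<ge> 0" "Re (trace (adj (adj Y) ** R ** adj Y)) \<ge> 0"
    using trq_nonneg[OF R] by blast+
  ultimately have "Re (trace (adj Y ** R ** Y)) = 0" by linarith
  thus ?thesis by (rule trq_zero[OF R])
qed

lemma linear_jprod: "linear (jprod (R::complex^'n^'n))"
  by (rule linearI) (simp_all add: jprod_def matrix_add_ldistrib madd_rdistrib matrix_scalar_ac scalar_matrix_assoc[symmetric] algebra_simps)

lemma jprod_surj: "strictly_pos_density R \<Longrightarrow> surj (jprod (R::complex^'n^'n))"
proof -
  assume R: "strictly_pos_density R"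
  have "inj (jprod R)"
  proof (rule injI)
    fix x y assume "jprod R x = jprod R y"
    hence "jprod R (x - y) = 0" using linear_diff[OF linear_jprod] by (metis right_minus_eq)
    from jprod_inj[OF R this] show "x = y" by simp
  qed
  thus ?thesis using linear_jprod by (intro linear_injective_imp_surjective) auto
qed

lemma jprod_unique_herm:
  assumes R: "strictly_pos_density R" and C: "hermitian C"
  shows "\<exists>!Y. hermitian Y \<and> jprod R Y = C"
proof -
  have hR: "hermitian R" using R by (simp add: strictly_pos_density_def)
  obtain Y where Y: "jprod R Y = C" using jprod_surj[OF R] by (metis surjD)
  have "jprod R (adj Y) = C" using jprod_adj[OF hR, of Y] Y C by (simp add: hermitian_def)
  hence "jprod R (adj Y - Y) = 0" using Y linear_diff[OF linear_jprod] by (metis right_minus_eq)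
  from jprod_inj[OF R this] have hY: "hermitian Y" by (simp add: hermitian_def)
  show ?thesis
  proof (rule ex1I[of _ Y])
    show "hermitian Y \<and> jprod R Y = C" using hY Y by simp
    fix Z assume "hermitian Z \<and> jprod R Z = C"
    hence "jprod R (Z - Y) = 0" using Y linear_diff[OF linear_jprod] by (metis right_minus_eq)
    from jprod_inj[OF R this] show "Z = Y" by simp
  qed
qed

lemma lmul_inj:
  assumes R: "strictly_pos_density R" and z: "R ** Z = 0"
  shows "Z = (0::complex^'k^'n)"
proof -
  have "trace (adj Z ** R ** Z) = 0" using z by (simp add: matrix_mul_assoc[symmetric] trace_def)
  thus ?thesis by (intro trq_zero[OF R]) simp
qed

lemma linear_lmul: "linear (\<lambda>Z. (R::complex^'n^'n) ** (Z::complex^'n^'n))"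
  by (rule linearI) (simp_all add: matrix_add_ldistrib matrix_scalar_ac scalar_matrix_assoc)

lemma lmul_unique:
  assumes R: "strictly_pos_density (R::complex^'n^'n)"
  shows "\<exists>!L. C = R ** (L::complex^'n^'n)"
proof -
  have inj: "inj (\<lambda>Z. R ** (Z::complex^'n^'n))"
  proof (rule injI)
    fix x y :: "complex^'n^'n" assume "R ** x = R ** y"
    hence "R ** (x - y) = 0" by (simp add: mdiff_ldistrib)
    from lmul_inj[OF R this] show "x = y" by simp
  qed
  hence "surj (\<lambda>Z. R ** (Z::complex^'n^'n))" using linear_lmul by (intro linear_injective_imp_surjective) auto
  from surjD[OF this, of C] obtain L where L: "C = R ** L" by blast
  show ?thesis
  proof (rule ex1I[of _ L])
    show "C = R ** L" by (rule L)
    fix M assume "C = R ** M"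
    hence "R ** (M - L) = 0" using L by (simp add: mdiff_ldistrib)
    from lmul_inj[OF R this] show "M = L" by simp
  qed
qed

lemma span_range_coeffs:
  fixes g :: "'d::finite \<Rightarrow> 'v::real_vector"
  assumes "x \<in> span (range g)"
  shows "\<exists>a. x = (\<Sum>l\<in>UNIV. a l *\<^sub>R g l)"
proof -
  have "subspace {x. \<exists>a. x = (\<Sum>l\<in>UNIV. a l *\<^sub>R g l)}"
    unfolding subspace_def
  proof safe
    show "\<exists>a. 0 = (\<Sum>l\<in>UNIV. a l *\<^sub>R g l)" by (intro exI[of _ "\<lambda>_. 0"]) simp
    fix a b show "\<exists>c. (\<Sum>l\<in>UNIV. a l *\<^sub>R g l) + (\<Sum>l\<in>UNIV. b l *\<^sub>R g l) = (\<Sum>l\<in>UNIV. c l *\<^sub>R g l)"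
      by (intro exI[of _ "\<lambda>l. a l + b l"]) (simp add: sum.distrib scaleR_add_left)
  next
    fix r a show "\<exists>c. r *\<^sub>R (\<Sum>l\<in>UNIV. a l *\<^sub>R g l) = (\<Sum>l\<in>UNIV. c l *\<^sub>R g l)"
      by (intro exI[of _ "\<lambda>l. r * a l"]) (simp add: scaleR_sum_right)
  qed
  moreover have "y \<in> {x. \<exists>a. x = (\<Sum>l\<in>UNIV. a l *\<^sub>R g l)}" if yin: "y \<in> range g" for y
  proof -
    obtain m where m: "y = g m" using yin by blast
    have "(\<Sum>l\<in>UNIV. (if l = m then 1 else 0) *\<^sub>R g l) = g m"
    proof -
      have "(\<Sum>l\<in>UNIV. (if l = m then 1 else 0) *\<^sub>R g l) = (\<Sum>l\<in>UNIV. if l = m then g m else 0)"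
        by (rule sum.cong) auto
      thus ?thesis by simp
    qed
    hence "y = (\<Sum>l\<in>UNIV. (if l = m then 1 else 0) *\<^sub>R g l)" using m by simp
    thus ?thesis by (intro CollectI exI[of _ "\<lambda>l. if l = m then 1 else 0"])
  qed
  ultimately have "x \<in> {x. \<exists>a. x = (\<Sum>l\<in>UNIV. a l *\<^sub>R g l)}"
    by (intro span_induct[OF assms, of "\<lambda>x. x \<in> {x. \<exists>a. x = (\<Sum>l\<in>UNIV. a l *\<^sub>R g l)}"]) auto
  thus ?thesis by simp
qed

lemma jprod_span:
  assumes S: "\<forall>l. dr l = jprod R (S l)" and Y: "Y \<in> span (range (S::'d::finite \<Rightarrow> complex^'n^'n))"
  shows "\<exists>a. jprod R Y = (\<Sum>l\<in>UNIV. a l *\<^sub>R dr l)"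
proof -
  have "jprod R Y \<in> jprod R ` span (range S)" using Y by blast
  also have "\<dots> = span (jprod R ` range S)" by (rule span_linear_image[OF linear_jprod, symmetric])
  also have "jprod R ` range S = range dr" using S by auto
  finally show ?thesis by (rule span_range_coeffs)
qed

lemma core_decomp:
  fixes R :: "complex^'n^'n" and dr S Lt :: "'d::finite \<Rightarrow> complex^'n^'n" and X :: "complex^'n^'n"
  assumes R: "strictly_pos_density R" and S: "\<forall>l. dr l = jprod R (S l)" and Lt: "\<forall>l. dr l = R ** Lt l"
    and Xs: "X \<in> span (range S)"
    and DX: "Y \<in> span (range S)" "jprod R Y = cscale \<i> (X ** R - R ** X)"
  shows "\<exists>c. X = (\<Sum>l\<in>UNIV. cscale (c l) (Lt l))"
proof -
  obtain a where a: "jprod R X = (\<Sum>l\<in>UNIV. a l *\<^sub>R dr l)" using jprod_span[OF S Xs] by blast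
  obtain b where b: "jprod R Y = (\<Sum>l\<in>UNIV. b l *\<^sub>R dr l)" using jprod_span[OF S DX(1)] by blast
  define c where "c l = complex_of_real (a l) + (\<i>/2) * complex_of_real (b l)" for l
  have gen: "(1/2::real) *\<^sub>R (A + B) + cscale (\<i>/2) (cscale \<i> (B - A)) = (A::complex^'n^'n)" for A B
    unfolding vec_eq_iff cscale_def by (simp add: cx_scaleR) (simp add: field_simps)
  have "R ** X = jprod R X + cscale (\<i>/2) (jprod R Y)"
    unfolding DX(2) jprod_def[of R X] using gen[of "R ** X" "X ** R"] by simp
  also have "\<dots> = (\<Sum>l\<in>UNIV. cscale (complex_of_real (a l)) (dr l)) + (\<Sum>l\<in>UNIV. cscale ((\<i>/2) * complex_of_real (b l)) (dr l))"
    unfolding a b scaleR_cscale cscale_sum cscale_cscale ..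
  also have "\<dots> = (\<Sum>l\<in>UNIV. cscale (c l) (dr l))"
    unfolding sum.distrib[symmetric] c_def cscale_add2 ..
  also have "\<dots> = R ** (\<Sum>l\<in>UNIV. cscale (c l) (Lt l))"
    unfolding mult_sum_right cscale_mult_right using Lt by simp
  finally have "R ** (X - (\<Sum>l\<in>UNIV. cscale (c l) (Lt l))) = 0" by (simp add: mdiff_ldistrib)
  from lmul_inj[OF R this] have "X = (\<Sum>l\<in>UNIV. cscale (c l) (Lt l))" by (simp only: right_minus_eq)
  thus ?thesis by (intro exI[of _ c])
qed

definition cmat :: "complex^'m^'n \<Rightarrow> complex^'m^'n" where "cmat W = (\<chi> i j. cnj (W$i$j))"
definition ofr :: "real^'m^'n \<Rightarrow> complex^'m^'n" where "ofr A = (\<chi> i j. complex_of_real (A$i$j))"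

lemma cmat_cmat[simp]: "cmat (cmat W) = W" by (simp add: cmat_def vec_eq_iff)
lemma cmat_mult: "cmat (A ** B) = cmat A ** cmat (B::complex^'k^'m)"
  by (simp add: cmat_def matrix_matrix_mult_def vec_eq_iff)
lemma cmat_ofr[simp]: "cmat (ofr A) = ofr A" by (simp add: cmat_def ofr_def vec_eq_iff)
lemma ofr_transpose: "transpose (ofr A) = ofr (transpose A)" by (simp add: ofr_def transpose_def vec_eq_iff)
lemma adj_cmat: "adj C = transpose (cmat C)" by (simp add: adj_def cmat_def transpose_def vec_eq_iff)
lemma mRe_ofr_left: "mRe (ofr A ** W) = A ** mRe (W::complex^'k^'m)"
  by (simp add: mRe_def ofr_def matrix_matrix_mult_def vec_eq_iff Re_sum)
lemma mRe_ofr_right: "mRe (W ** ofr A) = mRe W ** (A::real^'k^'m)"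
  by (simp add: mRe_def ofr_def matrix_matrix_mult_def vec_eq_iff Re_sum)
lemma mIm_ofr_left: "mIm (ofr A ** W) = A ** mIm (W::complex^'k^'m)"
  by (simp add: mIm_def ofr_def matrix_matrix_mult_def vec_eq_iff Im_sum)
lemma mIm_ofr_right: "mIm (W ** ofr A) = mIm W ** (A::real^'k^'m)"
  by (simp add: mIm_def ofr_def matrix_matrix_mult_def vec_eq_iff Im_sum)
lemma mRe_cmat: "mRe (cmat W) = mRe W" by (simp add: mRe_def cmat_def)
lemma mIm_cmat: "mIm (cmat W) = - mIm W" by (simp add: mIm_def cmat_def vec_eq_iff)

lemma trace_lin_right: "trace (A ** (\<Sum>m\<in>I. cscale (f m) (B m))) = (\<Sum>m\<in>I. f m * trace (A ** B m :: complex^'n^'n))"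
  by (simp add: mult_sum_right cscale_mult_right trace_sum trace_cscale)
lemma trace_lin_left: "trace ((\<Sum>m\<in>I. cscale (f m) (B m)) ** A) = (\<Sum>m\<in>I. f m * trace (B m ** A :: complex^'n^'n))"
  by (simp add: mult_sum_left cscale_mult_left trace_sum trace_cscale)

lemma herm_trace_real:
  assumes "hermitian A" "hermitian B"
  shows "trace (A ** B) = complex_of_real (Re (trace (A ** (B::complex^'n^'n))))"
proof -
  have "cnj (trace (A ** B)) = trace (adj (A ** B))" by (simp add: trace_adj)
  also have "\<dots> = trace (B ** A)" using assms unfolding adj_mult hermitian_def by simp
  also have "\<dots> = trace (A ** B)" by (rule trace_mul_sym)
  finally have "cnj (trace (A ** B)) = trace (A ** B)" .
  hence "Im (trace (A ** B)) = 0" by (metis cnj.sel(2) complex.expand cnj.sel(1) neg_equal_zero)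
  thus ?thesis by (simp add: complex_eq_iff)
qed

lemma trace_algebra:
  fixes R :: "complex^'n^'n" and dr Lt :: "'d::finite \<Rightarrow> complex^'n^'n" and X :: "'k::finite \<Rightarrow> complex^'n^'n"
    and c :: "'k \<Rightarrow> 'd \<Rightarrow> complex"
  assumes Xc: "\<And>k. X k = (\<Sum>l\<in>UNIV. cscale (c k l) (Lt l))" and Xh: "\<And>k. hermitian (X k)"
    and Lt: "\<And>l. dr l = R ** Lt l"
  defines "J \<equiv> (\<chi> j k. trace (R ** Lt k ** adj (Lt j)))" and "C \<equiv> (\<chi> k l. c k l)"
  shows "(\<chi> k l. trace (dr l ** X k)) = cmat C ** J"
    and "(\<chi> k j. trace (R ** X k ** X j)) = C ** transpose J ** adj C"
proof -
  have Xa: "X k = (\<Sum>m\<in>UNIV. cscale (cnj (c k m)) (adj (Lt m)))" for k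
  proof -
    have "X k = adj (X k)" using Xh[of k] by (simp add: hermitian_def)
    also have "\<dots> = (\<Sum>m\<in>UNIV. cscale (cnj (c k m)) (adj (Lt m)))" unfolding Xc[of k] adj_sum adj_cscale ..
    finally show ?thesis .
  qed
  show "(\<chi> k l. trace (dr l ** X k)) = cmat C ** J"
  proof -
    have "trace (dr l ** X k) = (\<Sum>m\<in>UNIV. cnj (c k m) * J$m$l)" for k l
    proof -
      have "trace (dr l ** X k) = trace ((R ** Lt l) ** (\<Sum>m\<in>UNIV. cscale (cnj (c k m)) (adj (Lt m))))"
        using Lt[of l] Xa[of k] by simp
      also have "\<dots> = (\<Sum>m\<in>UNIV. cnj (c k m) * J$m$l)" unfolding trace_lin_right J_def by simp
      finally show ?thesis .
    qed
    thus ?thesis unfolding cmat_def C_def matrix_matrix_mult_def by (simp add: vec_eq_iff)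
  qed
  show "(\<chi> k j. trace (R ** X k ** X j)) = C ** transpose J ** adj C"
  proof -
    have "trace (R ** X k ** X j) = (\<Sum>b\<in>UNIV. (\<Sum>a\<in>UNIV. c k a * J$b$a) * cnj (c j b))" for k j
    proof -
      have "trace (R ** X k ** X j) = trace ((R ** X k) ** (\<Sum>b\<in>UNIV. cscale (cnj (c j b)) (adj (Lt b))))"
        using Xa[of j] by simp
      also have "\<dots> = (\<Sum>b\<in>UNIV. cnj (c j b) * trace ((R ** X k) ** adj (Lt b)))" unfolding trace_lin_right ..
      also have "\<dots> = (\<Sum>b\<in>UNIV. cnj (c j b) * (\<Sum>a\<in>UNIV. c k a * J$b$a))"
      proof (intro sum.cong refl)
        fix b
        have "trace ((R ** X k) ** adj (Lt b)) = trace ((\<Sum>a\<in>UNIV. cscale (c k a) (R ** Lt a)) ** adj (Lt b))"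
          unfolding Xc[of k] mult_sum_right cscale_mult_right ..
        also have "\<dots> = (\<Sum>a\<in>UNIV. c k a * J$b$a)" unfolding trace_lin_left J_def by simp
        finally show "cnj (c j b) * trace ((R ** X k) ** adj (Lt b)) = cnj (c j b) * (\<Sum>a\<in>UNIV. c k a * J$b$a)" by simp
      qed
      finally show ?thesis by (simp add: mult.commute)
    qed
    thus ?thesis unfolding C_def matrix_matrix_mult_def transpose_def adj_def by (simp add: vec_eq_iff)
  qed
qed

lemma inv_facts:
  assumes "invertible (J::'a::semiring_1^'n^'n)"
  shows "J ** matrix_inv J = mat 1" "matrix_inv J ** J = mat 1"
proof -
  from assms obtain A where "J ** A = mat 1 \<and> A ** J = mat 1" unfolding invertible_def by blast
  hence "J ** matrix_inv J = mat 1 \<and> matrix_inv J ** J = mat 1"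
    unfolding matrix_inv_def by (rule someI[of "\<lambda>A. J ** A = mat 1 \<and> A ** J = mat 1"])
  thus "J ** matrix_inv J = mat 1" "matrix_inv J ** J = mat 1" by auto
qed

lemma final_algebra:
  fixes J :: "complex^'d^'d" and C :: "complex^'d^'k" and P :: "real^'d^'k"
  assumes J: "invertible J" and PC: "ofr P = cmat C ** J"
  shows "C ** transpose J ** adj C = ofr P ** cmat (matrix_inv J) ** ofr (transpose P)"
proof -
  define Ji where "Ji = matrix_inv J"
  have JJi: "J ** Ji = mat 1" "Ji ** J = mat 1" using inv_facts[OF J] unfolding Ji_def by auto
  have cC: "cmat C = ofr P ** Ji" using PC JJi by (simp add: matrix_mul_assoc[symmetric])
  have C: "C = ofr P ** cmat Ji" using arg_cong[OF cC, of cmat] by (simp add: cmat_mult)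
  have aC: "adj C = transpose Ji ** ofr (transpose P)"
    unfolding adj_cmat cC by (simp add: matrix_transpose_mul ofr_transpose)
  have "transpose J ** transpose Ji = mat 1" using JJi by (metis matrix_transpose_mul transpose_mat)
  have "C ** transpose J ** adj C = (ofr P ** cmat Ji) ** transpose J ** (transpose Ji ** ofr (transpose P))"
    by (simp only: aC) (simp only: C)
  also have "\<dots> = ofr P ** cmat Ji ** (transpose J ** transpose Ji) ** ofr (transpose P)"
    by (simp add: matrix_mul_assoc)
  also have "\<dots> = ofr P ** cmat Ji ** ofr (transpose P)"
    using \<open>transpose J ** transpose Ji = mat 1\<close> by simp
  finally show ?thesis unfolding Ji_def .
qed

lemma cscale_neg_i: "cscale (- \<i>) (M - N) = cscale \<i> (N - (M::complex^'n^'n))"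
  by (simp add: cscale_def vec_eq_iff algebra_simps)

lemma comm_herm:
  assumes "hermitian X" "hermitian R"
  shows "hermitian (cscale \<i> (X ** R - R ** (X::complex^'n^'n)))"
  using assms unfolding hermitian_def by (simp add: adj_cscale adj_diff adj_mult cscale_neg_i)

lemma mult_neg_right: "A ** (- K) = - (A ** (K::real^'k^'m))"
  by (simp add: matrix_matrix_mult_def vec_eq_iff sum_negf)

lemma mult_neg_left: "(- M) ** B = - (M ** (B::real^'k^'m))"
  by (simp add: matrix_matrix_mult_def vec_eq_iff sum_negf)

lemma posdef_psd: "posdef G \<Longrightarrow> psd G"
  unfolding posdef_def psd_def by (metis inner_zero_left order_refl less_imp_le)

theorem mainTheorem3:
  fixes \<Theta> :: "(real^'d::finite) set"
    and \<rho> :: "real^'d \<Rightarrow> complex^'n::finite^'n"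
    and \<iota> :: "'k::finite \<Rightarrow> 'd"
    and \<theta> :: "real^'d"
    and X :: "'k \<Rightarrow> complex^'n^'n"
    and G :: "real^'k^'k"
  assumes model: "qmodel \<Theta> \<rho>"
    and sub: "inj \<iota>"
    and theta_in: "\<theta> \<in> \<Theta>"
    and theta_sub: "\<forall>l. l \<notin> range \<iota> \<longrightarrow> \<theta> $ l = 0"
    and Dinv: "D_invariant \<rho> \<theta>"
    and Jinv: "invertible (RLD_Fisher \<rho> \<theta>)"
    and X_herm: "\<forall>k. hermitian (X k)"
    and X_span: "\<forall>k. X k \<in> span (range (SLD \<rho> \<theta>))"
    and X_unb: "\<forall>j k. trace (partial_rho \<rho> \<theta> (\<iota> k) ** X j) = (if j = k then 1 else 0)"
    and G_pd: "posdef G"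
  shows "C_bound \<rho> \<theta> G X = RLD_bound \<rho> \<theta> (transpose (Pmat \<rho> \<theta> X) ** G ** Pmat \<rho> \<theta> X)"
proof -
  define R where "R = \<rho> \<theta>"
  define dr where "dr = partial_rho \<rho> \<theta>"
  define S where "S = SLD \<rho> \<theta>"
  define Lt where "Lt = RLD \<rho> \<theta>"
  have drh: "\<And>l. hermitian (dr l)" and spd: "strictly_pos_density R"
    using model_facts[OF model theta_in] unfolding dr_def R_def by auto
  have hR: "hermitian R" using spd by (simp add: strictly_pos_density_def)
  have S: "\<forall>l. dr l = jprod R (S l)"
  proof
    fix l
    have "\<exists>!L. hermitian L \<and> dr l = jprod R L"
      using jprod_unique_herm[OF spd drh[of l]] by metis
    from theI'[OF this] show "dr l = jprod R (S l)"
      unfolding S_def SLD_def dr_def[symmetric] R_def[symmetric] by blast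
  qed
  have Lt: "\<forall>l. dr l = R ** Lt l"
  proof
    fix l
    from theI'[OF lmul_unique[OF spd, of "dr l"]] show "dr l = R ** Lt l"
      unfolding Lt_def RLD_def dr_def[symmetric] R_def[symmetric] .
  qed
  have decomp: "\<exists>c. X k = (\<Sum>l\<in>UNIV. cscale (c l) (Lt l))" for k
  proof -
    define Y where "Y = D_op \<rho> \<theta> (X k)"
    have "\<exists>!Y. hermitian Y \<and> jprod R Y = cscale \<i> (X k ** R - R ** X k)"
      by (rule jprod_unique_herm[OF spd comm_herm[OF X_herm[rule_format] hR]])
    from theI'[OF this] have DY: "jprod R Y = cscale \<i> (X k ** R - R ** X k)"
      unfolding Y_def D_op_def R_def[symmetric] by blast
    have Xs: "X k \<in> span (range S)" using X_span S_def by simp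
    have Ys: "Y \<in> span (range S)" using Dinv Xs unfolding D_invariant_def Y_def S_def by blast
    show ?thesis by (rule core_decomp[OF spd S Lt Xs Ys DY])
  qed
  then obtain c where c: "\<And>k. X k = (\<Sum>l\<in>UNIV. cscale (c k l) (Lt l))" by metis
  define J where "J = RLD_Fisher \<rho> \<theta>"
  have J_eq: "J = (\<chi> j k. trace (R ** Lt k ** adj (Lt j)))"
    unfolding J_def RLD_Fisher_def R_def Lt_def ..
  define C where "C = (\<chi> k l. c k l)"
  have TA1: "(\<chi> k l. trace (dr l ** X k)) = cmat C ** J"
    and TA2: "(\<chi> k j. trace (R ** X k ** X j)) = C ** transpose J ** adj C"
    using trace_algebra[of X c Lt dr R, OF c X_herm[rule_format] Lt[rule_format]]
    unfolding J_eq C_def by auto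
  define P where "P = Pmat \<rho> \<theta> X"
  have "ofr P = (\<chi> k l. trace (dr l ** X k))"
    unfolding P_def Pmat_def ofr_def dr_def[symmetric]
    using herm_trace_real[OF drh X_herm[rule_format]] by (simp add: vec_eq_iff)
  hence PC: "ofr P = cmat C ** J" using TA1 by simp
  have Z: "Zmat \<rho> \<theta> X = ofr P ** cmat (matrix_inv J) ** ofr (transpose P)"
    unfolding Zmat_def R_def[symmetric] TA2 using final_algebra[OF Jinv[folded J_def] PC] .
  define Ji where "Ji = matrix_inv J"
  have ReZ: "mRe (Zmat \<rho> \<theta> X) = P ** mRe Ji ** transpose P"
    unfolding Z Ji_def[symmetric] by (simp add: mRe_ofr_right mRe_ofr_left mRe_cmat)
  have ImZ: "mIm (Zmat \<rho> \<theta> X) = P ** (- mIm Ji) ** transpose P"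
    unfolding Z Ji_def[symmetric] by (simp add: mIm_ofr_right mIm_ofr_left mIm_cmat)
  have Gp: "psd G" by (rule posdef_psd[OF G_pd])
  define H where "H = transpose P ** G ** P"
  have "C_bound \<rho> \<theta> G X = trace (msqrt G ** (P ** mRe Ji ** transpose P) ** msqrt G)
      + trace (mabs (msqrt G ** (P ** (- mIm Ji) ** transpose P) ** msqrt G))"
    unfolding C_bound_def ReZ ImZ ..
  also have "\<dots> = trace (msqrt H ** mRe Ji ** msqrt H) + trace (mabs (msqrt H ** (- mIm Ji) ** msqrt H))"
    unfolding H_def re_part_transfer[OF Gp] im_part_transfer[OF Gp] ..
  also have "\<dots> = trace (msqrt H ** mRe Ji ** msqrt H) + trace (mabs (msqrt H ** mIm Ji ** msqrt H))"
    by (simp add: mult_neg_right mult_neg_left mabs_neg)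
  also have "\<dots> = RLD_bound \<rho> \<theta> H"
    unfolding RLD_bound_def Let_def J_def[symmetric] Ji_def[symmetric] ..
  finally show ?thesis unfolding H_def P_def .
qed

end
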